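(* Assume the standing hypothesis (H) below and let $K>0$. Then there exists $m_K>0$ such that for all $w,w'\in W$ with $\max\{|w|_W,|w'|_W\}\le K$ and $|w-w'|_W<m_K$, and all $x\in Z(w)$, $x'\in Z(w')$, $$\big|\mathrm{dist}(x,\partial Z(w))-\mathrm{dist}(x',\partial Z(w'))\big|\le|x-x'|+d_H(Z(w),Z(w')).$$
   Context: $X$ is a real Hilbert space with inner product $\langle\cdot,\cdot\rangle$ and norm $|x|=\sqrt{\langle x,x\rangle}$; $W$ is a real Banach space with norm $|\cdot|_W$. $G:X\times W\to[0,\infty)$ is locally Lipschitz continuous and $Z(w):=\{x\in X: G(x,w)\le 1\}$; $\partial Z(w)$ is its boundary, $\mathrm{dist}(x,S)=\inf_{s\in S}|x-s|$, and $d_H(A,B)=\max\{\sup_{z\in A}\mathrm{dist}(z,B),\sup_{z'\in B}\mathrm{dist}(z',A)\}$ is the Hausdorff distance. The partial gradient $\nabla_xG(x,w)\in X$ is defined by $\langle\nabla_xG(x,w),y\rangle=\lim_{t\to0}\frac1t(G(x+ty,w)-G(x,w))$ for all $y\in X$. (H): $\nabla_xG(x,w)$ exists for all $(x,w)$; there are positive constants $\lambda,c,L$ and functions $\mu_1:W\times[0,\infty)\to[0,\infty)$, $\mu_2:[0,\infty)\to[0,\infty)$ with $\mu_1(w,0)=\mu_2(0)=0$, $\lim_{s\to\infty}\mu_1(w,s)=\lim_{s\to\infty}\mu_2(s)=\infty$ for every $w$, such that for all $x,y,z\in X$, $w,w'\in W$: (i) $G(x,w)=1\Rightarrow|\nabla_xG(x,w)|\ge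 c$; (ii) $|\nabla_xG(x,w)-\nabla_xG(y,w)|\le\mu_1(w,|x-y|)$ if $x,y\in Z(w)$; (iii) $\langle\nabla_xG(x,w)-\nabla_xG(z,w),x-z\rangle\ge-\lambda|x-z|^2$ if $x\in\partial Z(w)$, $z\in Z(w)$; (iv) $|G(x,w)-G(x,w')|\le L|w-w'|_W$; (v) for $\rho>0$, $\mathrm{dist}(x,Z(w))\ge\rho\Rightarrow G(x,w)-1\ge\mu_2(\rho)$. *)

theory Defs
  imports "HOL-Analysis.Analysis"
begin

(* Hausdorff distance d_H(A,B), valued in the extended reals (it may be +infinity
   for unbounded sets).  dist(z,B) is the library's infdist z B. *)
definition hausdorff_dist :: "'a::metric_space set \<Rightarrow> 'a set \<Rightarrow> ereal" where
  "hausdorff_dist A B =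
     max (SUP z\<in>A. ereal (infdist z B)) (SUP z\<in>B. ereal (infdist z A))"

definition locally_lipschitz :: "('a::metric_space \<Rightarrow> real) \<Rightarrow> bool" where
  "locally_lipschitz f \<longleftrightarrow> (\<forall>p. \<exists>e>0. \<exists>C. C-lipschitz_on (ball p e) f)"

definition Zset :: "('x \<times> 'w \<Rightarrow> real) \<Rightarrow> 'w \<Rightarrow> 'x set" where
  "Zset G w = {x. G (x, w) \<le> 1}"

end

theory Submission
  imports Defs
begin


lemma ekeland:
  fixes f :: "'a::complete_space \<Rightarrow> real"
  assumes A: "closed A" "x0 \<in> A" and f: "continuous_on A f"
    and lb: "\<And>x. x \<in> A \<Longrightarrow> f x \<ge> b" and e: "e > 0"
  shows "\<exists>x\<in>A. f x \<le> f x0 \<and> (\<forall>y\<in>A. y \<noteq> x \<longrightarrow> f x - e * dist x y < f y)"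
proof -
  define S where "S x = {y\<in>A. f y + e * dist x y \<le> f x}" for x
  have S_refl: "x \<in> S x" if "x \<in> A" for x using that by (simp add: S_def)
  have S_A: "S x \<subseteq> A" for x by (auto simp: S_def)
  have S_trans: "z \<in> S x" if "y \<in> S x" "z \<in> S y" for x y z
  proof -
    have "dist x z \<le> dist x y + dist y z" by (rule dist_triangle)
    hence "e * dist x z \<le> e * dist x y + e * dist y z" using e
      by (metis distrib_left mult_left_mono less_imp_le)
    thus ?thesis using that by (auto simp: S_def)
  qed
  have S_closed: "closed (S x)" for x
  proof -
    have "S x = {y \<in> A. f y + e * dist x y \<le> f x}" by (simp add: S_def)
    moreover have "closed {y \<in> A. f y + e * dist x y \<le> f x}"
      by (rule continuous_on_closed_Collect_le[OF _ _ A(1)])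
         (auto intro!: continuous_intros f)
    ultimately show ?thesis by simp
  qed
  have ex: "\<exists>y. y \<in> S x \<and> f y < Inf (f ` S x) + (1/2)^n" if "x \<in> A" for x n
  proof -
    have "S x \<noteq> {}" using S_refl[OF that] by auto
    hence "f ` S x \<noteq> {}" by simp
    moreover have "Inf (f ` S x) < Inf (f ` S x) + (1/2)^n"
      using zero_less_power[of "1/2::real" n] by linarith
    ultimately obtain r where "r \<in> f ` S x" "r < Inf (f ` S x) + (1/2)^n"
      by (meson cInf_lessD)
    thus ?thesis by auto
  qed
  define nxt where "nxt n x = (SOME y. y \<in> S x \<and> f y < Inf (f ` S x) + (1/2)^n)" for n x
  define X where "X = rec_nat x0 nxt"
  have X0: "X 0 = x0" and XS: "X (Suc n) = nxt n (X n)" for n by (simp_all add: X_def)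
  have XA: "X n \<in> A" for n
  proof (induction n)
    case 0 then show ?case using A by (simp add: X0)
  next
    case (Suc n)
    from someI_ex[OF ex[OF Suc]] have "nxt n (X n) \<in> S (X n)" by (simp add: nxt_def)
    then show ?case using S_A by (auto simp: XS)
  qed
  have Xstep: "X (Suc n) \<in> S (X n) \<and> f (X (Suc n)) < Inf (f ` S (X n)) + (1/2)^n" for n
    using someI_ex[OF ex[OF XA[of n]]] by (simp add: nxt_def XS)
  have nest: "X m \<in> S (X n)" if "n \<le> m" for m n
    using that
  proof (induction m)
    case 0 then show ?case using S_refl XA by auto
  next
    case (Suc m)
    show ?case
    proof (cases "n = Suc m")
      case True then show ?thesis using S_refl XA by auto
    next
      case False
      then have "X m \<in> S (X n)" using Suc by auto
      then show ?thesis using S_trans Xstep by blast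
    qed
  qed
  have bdd: "bdd_below (f ` S x)" for x using lb S_A by (auto intro!: bdd_belowI2)
  have key: "e * dist (X (Suc n)) z \<le> (1/2)^n" if "z \<in> S (X (Suc n))" for n z
  proof -
    have "z \<in> S (X n)" using S_trans Xstep that by blast
    hence "Inf (f ` S (X n)) \<le> f z" using bdd by (auto intro!: cInf_lower)
    moreover have "f z + e * dist (X (Suc n)) z \<le> f (X (Suc n))" using that by (simp add: S_def)
    ultimately show ?thesis using Xstep[of n] by linarith
  qed
  have dkey: "dist (X (Suc n)) z \<le> (1/2)^n / e" if "z \<in> S (X (Suc n))" for n z
    using key[OF that] e by (simp add: field_simps)
  have "Cauchy X"
  proof (rule metric_CauchyI)
    fix eps :: real assume "eps > 0"
    then obtain N where N: "(1/2::real)^N < eps * e / 2" using real_arch_pow_inv[of "eps*e/2" "1/2"] e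
      by auto
    show "\<exists>M. \<forall>m\<ge>M. \<forall>n\<ge>M. dist (X m) (X n) < eps"
    proof (intro exI allI impI)
      fix m n assume "Suc N \<le> m" "Suc N \<le> n"
      have "dist (X (Suc N)) (X m) \<le> (1/2)^N / e" using dkey nest \<open>Suc N \<le> m\<close> by blast
      moreover have "dist (X (Suc N)) (X n) \<le> (1/2)^N / e" using dkey nest \<open>Suc N \<le> n\<close> by blast
      moreover have "dist (X m) (X n) \<le> dist (X (Suc N)) (X m) + dist (X (Suc N)) (X n)"
        by (metis dist_commute dist_triangle)
      moreover have "2 * ((1/2)^N / e) < eps" using N e by (simp add: field_simps)
      ultimately show "dist (X m) (X n) < eps" by linarith
    qed
  qed
  then obtain xs where lim: "X \<longlonglongrightarrow> xs" using Cauchy_convergent_iff convergent_def by blast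
  have xsS: "xs \<in> S (X n)" for n
  proof -
    have "eventually (\<lambda>m. X m \<in> S (X n)) sequentially"
      using nest by (auto simp: eventually_sequentially)
    thus ?thesis using closed_sequentially S_closed lim
      by (metis Lim_in_closed_set trivial_limit_sequentially)
  qed
  have xsA: "xs \<in> A" using xsS S_A by blast
  have "f xs + e * dist x0 xs \<le> f x0" using xsS[of 0] by (auto simp: S_def X0)
  moreover have "e * dist x0 xs \<ge> 0" using e by simp
  ultimately have "f xs \<le> f x0" by linarith
  moreover have "\<forall>y\<in>A. y \<noteq> xs \<longrightarrow> f xs - e * dist xs y < f y"
  proof (intro ballI impI, rule ccontr)
    fix y assume y: "y \<in> A" "y \<noteq> xs" "\<not> f xs - e * dist xs y < f y"
    hence "y \<in> S xs" by (auto simp: S_def)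
    hence yS: "y \<in> S (X (Suc n))" for n using S_trans xsS by blast
    have bnd: "dist xs y \<le> 2 * (1/2)^n / e" for n
    proof -
      have "dist (X (Suc n)) y \<le> (1/2)^n / e" using dkey yS by blast
      moreover have "dist (X (Suc n)) xs \<le> (1/2)^n / e" using dkey xsS by blast
      moreover have "dist xs y \<le> dist (X (Suc n)) xs + dist (X (Suc n)) y"
        by (metis dist_commute dist_triangle)
      ultimately show ?thesis by simp
    qed
    have "dist xs y > 0" using y by simp
    then obtain n where "(1/2::real)^n < dist xs y * e / 2" using real_arch_pow_inv[of "dist xs y * e/2" "1/2"] e
      by auto
    hence "2 * (1/2)^n / e < dist xs y" using e by (simp add: field_simps)
    then show False using bnd[of n] by linarith
  qed
  ultimately show ?thesis using xsA by blast
qed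




lemma cont_G:
  assumes "locally_lipschitz G"
  shows "continuous_on UNIV G"
proof -
  have "isCont G p" for p
  proof -
    obtain e C where e: "e > 0" "C-lipschitz_on (ball p e) G"
      using assms unfolding locally_lipschitz_def by blast
    hence "continuous_on (ball p e) G" using lipschitz_on_continuous_on by blast
    thus ?thesis using e(1) by (simp add: continuous_on_eq_continuous_at)
  qed
  thus ?thesis by (simp add: continuous_at_imp_continuous_on)
qed

lemma contG_x:
  assumes "continuous_on UNIV G"
  shows "continuous_on UNIV (\<lambda>x. G (x, w))"
  by (rule continuous_on_compose2[OF assms]) (auto intro!: continuous_intros)

lemma Z_closed:
  assumes "continuous_on UNIV G"
  shows "closed (Zset G w)"
proof -
  have "Zset G w = {x. G (x, w) \<le> 1}" by (simp add: Zset_def)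
  moreover have "closed {x. G (x, w) \<le> 1}"
    using continuous_on_closed_Collect_le[OF contG_x[OF assms, of w] continuous_on_const closed_UNIV, of 1]
    by simp
  ultimately show ?thesis by simp
qed

lemma frontier_G1:
  assumes "continuous_on UNIV G" "y \<in> frontier (Zset G w)"
  shows "G (y, w) = 1"
proof -
  have "y \<in> Zset G w" using assms frontier_subset_closed Z_closed by blast
  hence le: "G (y, w) \<le> 1" by (simp add: Zset_def)
  show ?thesis
  proof (rule ccontr)
    assume "G (y, w) \<noteq> 1"
    hence lt: "G (y, w) < 1" using le by simp
    have "open {x. G (x, w) < 1}"
      using open_Collect_less[OF contG_x[OF assms(1), of w] continuous_on_const, of 1] by simp
    moreover have "{x. G (x, w) < 1} \<subseteq> Zset G w" by (auto simp: Zset_def)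
    ultimately have "y \<in> interior (Zset G w)" using lt by (meson interior_maximal interior_open mem_Collect_eq subsetD)
    thus False using assms(2) by (simp add: frontier_def)
  qed
qed

lemma G1_frontier:
  fixes G :: "'x::real_inner \<times> 'w \<Rightarrow> real"
  assumes grad: "((\<lambda>t. (G (x + t *\<^sub>R gradG x w, w) - G (x, w)) / t) \<longlongrightarrow> inner (gradG x w) (gradG x w)) (at 0)"
    and gpos: "gradG x w \<noteq> 0" and G1: "G (x, w) = 1"
  shows "x \<in> frontier (Zset G w)"
proof -
  define g where "g = gradG x w"
  have xZ: "x \<in> Zset G w" using G1 by (simp add: Zset_def)
  have "x \<notin> interior (Zset G w)"
  proof
    assume "x \<in> interior (Zset G w)"
    then obtain e where e: "e > 0" "ball x e \<subseteq> Zset G w" using mem_interior by blast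
    have "inner g g > 0" using gpos by (simp add: g_def)
    hence "eventually (\<lambda>t. (G (x + t *\<^sub>R g, w) - G (x, w)) / t > 0) (at 0)"
      using order_tendstoD(1)[OF grad[folded g_def]] by simp
    then obtain d where d: "d > 0" "\<And>t. t \<noteq> 0 \<Longrightarrow> dist t 0 < d \<Longrightarrow> (G (x + t *\<^sub>R g, w) - G (x, w)) / t > 0"
      unfolding eventually_at by auto
    define t where "t = min d (e / norm g) / 2"
    have ng: "norm g > 0" using gpos by (simp add: g_def)
    have tpos: "t > 0" using d e ng by (simp add: t_def)
    have "t < d" using d e ng by (simp add: t_def)
    hence "(G (x + t *\<^sub>R g, w) - G (x, w)) / t > 0" using d tpos by simp
    hence "G (x + t *\<^sub>R g, w) > 1" using tpos G1 by (simp add: zero_less_divide_iff)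
    moreover have "t * norm g < e"
    proof -
      have "min d (e / norm g) \<le> e / norm g" by simp
      moreover have "e / norm g > 0" using e ng by simp
      ultimately have "t < e / norm g" unfolding t_def
        by (metis (no_types) half_gt_zero_iff le_less_trans less_le_not_le linorder_not_le field_sum_of_halves add_less_cancel_left add_0_right)
      thus ?thesis using ng by (simp add: field_simps)
    qed
    hence "x + t *\<^sub>R g \<in> ball x e" using tpos by (simp add: dist_norm)
    ultimately show False using e(2) by (auto simp: Zset_def)
  qed
  thus ?thesis using xZ closure_subset by (auto simp: frontier_def)
qed




lemma ext_ineq:
  fixes G :: "'x::real_inner \<times> 'w::topological_space \<Rightarrow> real"
  assumes contG: "continuous_on UNIV G"
    and grad: "\<And>x w y. ((\<lambda>t. (G (x + t *\<^sub>R y, w) - G (x, w)) / t)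
                         \<longlongrightarrow> inner (gradG x w) y) (at 0)"
    and c: "c > 0" and lam: "lam > 0"
    and H1: "\<And>x w. G (x, w) = 1 \<Longrightarrow> norm (gradG x w) \<ge> c"
    and H3: "\<And>x z w. x \<in> frontier (Zset G w) \<Longrightarrow> z \<in> Zset G w \<Longrightarrow>
               inner (gradG x w - gradG z w) (x - z) \<ge> - lam * (norm (x - z))\<^sup>2"
    and y: "y \<in> frontier (Zset G w)" and z: "z \<in> Zset G w"
  shows "inner (gradG y w) (z - y) \<le> lam * (norm (z - y))\<^sup>2"
proof (cases "inner (gradG y w) (z - y) > 0")
  case False
  then show ?thesis using lam by (smt (verit) mult_nonneg_nonneg zero_le_power2)
next
  case True
  define v where "v = z - y"
  define g where "g = gradG y w"
  define \<phi> where "\<phi> s = G (y + s *\<^sub>R v, w)" for s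
  have Gy: "G (y, w) = 1" using frontier_G1[OF contG y] .
  have yZ: "y \<in> Zset G w" using Gy by (simp add: Zset_def)
  have contphi: "continuous_on UNIV \<phi>"
    unfolding \<phi>_def by (rule continuous_on_compose2[OF contG]) (auto intro!: continuous_intros)
  have gv: "inner g v > 0" using True by (simp add: g_def v_def)
  have "eventually (\<lambda>t. (G (y + t *\<^sub>R v, w) - G (y, w)) / t > 0) (at 0)"
    using order_tendstoD(1)[OF grad[of y v w]] gv by (simp add: g_def)
  then obtain d where d: "d > 0" "\<And>t. t \<noteq> 0 \<Longrightarrow> dist t 0 < d \<Longrightarrow> (G (y + t *\<^sub>R v, w) - G (y, w)) / t > 0"
    unfolding eventually_at by auto
  have phi_small: "\<phi> t > 1" if "0 < t" "t < d" for t
  proof -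
    have "(G (y + t *\<^sub>R v, w) - G (y, w)) / t > 0" using d that by simp
    thus ?thesis using that Gy by (simp add: \<phi>_def zero_less_divide_iff)
  qed
  define d1 where "d1 = min (d/2) (1/2)"
  have d1: "0 < d1" "d1 < d" "d1 \<le> 1" using d by (auto simp: d1_def)
  define T where "T = {s \<in> {d1..1}. \<phi> s \<le> 1}"
  have phi1: "\<phi> 1 \<le> 1" using z by (simp add: \<phi>_def v_def Zset_def)
  have T1: "1 \<in> T" using d1 phi1 by (simp add: T_def)
  have Tcl: "closed T" unfolding T_def
    by (rule continuous_on_closed_Collect_le) (auto intro: continuous_on_subset[OF contphi])
  have Tbdd: "bdd_below T" by (auto simp: T_def intro!: bdd_belowI[of _ d1])
  define s1 where "s1 = Inf T"
  have s1T: "s1 \<in> T" unfolding s1_def using closed_contains_Inf[OF _ Tbdd Tcl] T1 by blast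
  have s1: "d1 \<le> s1" "s1 \<le> 1" "\<phi> s1 \<le> 1" using s1T by (auto simp: T_def)
  have phi_gt: "\<phi> s > 1" if "0 < s" "s < s1" for s
  proof (cases "s < d1")
    case True thus ?thesis using phi_small that d1 by simp
  next
    case False
    show ?thesis
    proof (rule ccontr)
      assume "\<not> 1 < \<phi> s"
      hence "s \<in> T" using False that s1 by (simp add: T_def)
      hence "s1 \<le> s" unfolding s1_def using Tbdd by (rule cInf_lower)
      thus False using that by simp
    qed
  qed
  have s1pos: "0 < s1" using s1 d1 by simp
  have "1 \<le> \<phi> s1"
  proof (rule tendsto_lowerbound)
    show "(\<phi> \<longlongrightarrow> \<phi> s1) (at_left s1)"
      using contphi by (meson UNIV_I continuous_on_def tendsto_within_subset subset_UNIV)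
    have "eventually (\<lambda>x. x \<in> {0<..<s1}) (at_left s1)" using eventually_at_left_real[OF s1pos] .
    thus "eventually (\<lambda>x. 1 \<le> \<phi> x) (at_left s1)"
      by eventually_elim (use phi_gt in \<open>auto intro: less_imp_le\<close>)
    show "at_left s1 \<noteq> bot" by simp
  qed
  hence phis1: "\<phi> s1 = 1" using s1 by simp
  define u1 where "u1 = y + s1 *\<^sub>R v"
  have Gu1: "G (u1, w) = 1" using phis1 by (simp add: \<phi>_def u1_def)
  have g1nz: "gradG u1 w \<noteq> 0" using H1[OF Gu1] c by auto
  have u1F: "u1 \<in> frontier (Zset G w)"
    by (rule G1_frontier[of G u1 gradG w, OF grad[of u1 "gradG u1 w" w] g1nz Gu1])
  have le0: "inner (gradG u1 w) v \<le> 0"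
  proof (rule tendsto_upperbound)
    show "((\<lambda>t. (G (u1 + t *\<^sub>R v, w) - G (u1, w)) / t) \<longlongrightarrow> inner (gradG u1 w) v) (at_left 0)"
      using grad[of u1 v w] by (rule tendsto_mono[OF at_within_le_at])
    have "eventually (\<lambda>x. x \<in> {-s1<..<0}) (at_left (0::real))" using eventually_at_left_real s1pos by simp
    thus "eventually (\<lambda>t. (G (u1 + t *\<^sub>R v, w) - G (u1, w)) / t \<le> 0) (at_left 0)"
    proof eventually_elim
      case (elim t)
      have "u1 + t *\<^sub>R v = y + (s1 + t) *\<^sub>R v" by (simp add: u1_def algebra_simps)
      hence "G (u1 + t *\<^sub>R v, w) > 1" using phi_gt[of "s1 + t"] elim by (simp add: \<phi>_def)
      thus ?case using elim Gu1 by (simp add: divide_le_0_iff)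
    qed
    show "at_left (0::real) \<noteq> bot" by simp
  qed
  have "inner (gradG u1 w - gradG y w) (u1 - y) \<ge> - lam * (norm (u1 - y))\<^sup>2" using H3[OF u1F yZ] .
  hence "s1 * (inner (gradG u1 w) v - inner g v) \<ge> - lam * (s1^2 * (norm v)\<^sup>2)"
    by (simp add: u1_def g_def inner_diff_left power_mult_distrib algebra_simps)
  hence "s1 * (inner (gradG u1 w) v - inner g v) \<ge> s1 * (- lam * s1 * (norm v)\<^sup>2)"
    by (simp add: power2_eq_square algebra_simps)
  hence "inner (gradG u1 w) v - inner g v \<ge> - lam * s1 * (norm v)\<^sup>2"
    using s1pos by (metis mult_le_cancel_left_pos mult_minus_right)
  hence "inner g v \<le> lam * s1 * (norm v)\<^sup>2" using le0 by linarith
  also have "\<dots> \<le> lam * (norm v)\<^sup>2"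
  proof -
    have "s1 * (norm v)\<^sup>2 \<le> 1 * (norm v)\<^sup>2" using s1 by (intro mult_right_mono) auto
    thus ?thesis using lam by (simp add: mult.assoc mult_left_mono)
  qed
  finally show ?thesis by (simp add: g_def v_def)
qed




lemma infdist_geI:
  assumes "A \<noteq> {}" "\<And>a. a \<in> A \<Longrightarrow> d \<le> dist x a"
  shows "d \<le> infdist x A"
  unfolding infdist_notempty[OF assms(1)] by (rule cINF_greatest) (use assms in auto)

lemma ext_dist:
  fixes G :: "'x::real_inner \<times> 'w::topological_space \<Rightarrow> real"
  assumes contG: "continuous_on UNIV G"
    and grad: "\<And>x w y. ((\<lambda>t. (G (x + t *\<^sub>R y, w) - G (x, w)) / t)
                         \<longlongrightarrow> inner (gradG x w) y) (at 0)"
    and c: "c > 0" and lam: "lam > 0"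
    and H1: "\<And>x w. G (x, w) = 1 \<Longrightarrow> norm (gradG x w) \<ge> c"
    and H3: "\<And>x z w. x \<in> frontier (Zset G w) \<Longrightarrow> z \<in> Zset G w \<Longrightarrow>
               inner (gradG x w - gradG z w) (x - z) \<ge> - lam * (norm (x - z))\<^sup>2"
    and y: "y \<in> frontier (Zset G w)" and t: "0 \<le> t" "t \<le> c / (2 * lam)"
  shows "t \<le> infdist (y + (t / norm (gradG y w)) *\<^sub>R gradG y w) (Zset G w)"
proof -
  define g where "g = gradG y w"
  define q where "q = y + (t / norm g) *\<^sub>R g"
  have Gy: "G (y, w) = 1" using frontier_G1[OF contG y] .
  have ng: "norm g \<ge> c" using H1[OF Gy] by (simp add: g_def)
  hence ngpos: "norm g > 0" using c by linarith
  have yZ: "y \<in> Zset G w" using Gy by (simp add: Zset_def)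
  have "t \<le> dist q z" if z: "z \<in> Zset G w" for z
  proof -
    define v where "v = z - y"
    define s where "s = t / norm g"
    have s0: "s \<ge> 0" using t ngpos by (simp add: s_def)
    have gv: "inner g v \<le> lam * (norm v)\<^sup>2"
      using ext_ineq[OF contG grad c lam H1 H3 y z] by (simp add: g_def v_def)
    have "2 * s * lam \<le> 1"
    proof -
      have "t \<le> norm g / (2 * lam)" using t ng lam by (smt (verit) divide_right_mono)
      hence "t * (2 * lam) \<le> norm g" using lam by (simp add: field_simps)
      thus ?thesis using ngpos by (simp add: s_def field_simps)
    qed
    hence "2 * s * inner g v \<le> (norm v)\<^sup>2"
    proof -
      have "2 * s * inner g v \<le> 2 * s * (lam * (norm v)\<^sup>2)" using gv s0 by (simp add: mult_left_mono)
      also have "\<dots> = (2 * s * lam) * (norm v)\<^sup>2" by simp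
      also have "\<dots> \<le> 1 * (norm v)\<^sup>2" using \<open>2 * s * lam \<le> 1\<close> by (intro mult_right_mono) auto
      finally show ?thesis by simp
    qed
    have qz: "q - z = s *\<^sub>R g - v" by (simp add: q_def s_def v_def)
    have "(norm (q - z))\<^sup>2 = s^2 * (norm g)\<^sup>2 - 2 * s * inner g v + (norm v)\<^sup>2"
    proof -
      have "(norm (q - z))\<^sup>2 = inner (s *\<^sub>R g - v) (s *\<^sub>R g - v)"
        unfolding qz by (rule power2_norm_eq_inner)
      also have "\<dots> = s * s * inner g g - 2 * s * inner g v + inner v v"
        by (simp add: inner_diff_left inner_diff_right inner_commute algebra_simps)
      finally show ?thesis by (simp add: power2_norm_eq_inner[symmetric] power2_eq_square)
    qed
    also have "s^2 * (norm g)\<^sup>2 = t^2" using ngpos by (simp add: s_def power_divide)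
    finally have "(norm (q - z))\<^sup>2 \<ge> t^2" using \<open>2 * s * inner g v \<le> (norm v)\<^sup>2\<close> by linarith
    hence "t \<le> norm (q - z)" using power2_le_imp_le[of t "norm (q - z)"] by simp
    thus ?thesis by (simp add: dist_norm)
  qed
  hence "t \<le> infdist q (Zset G w)" using yZ
    by (intro infdist_geI) auto
  thus ?thesis by (simp add: q_def g_def)
qed




lemma speed:
  fixes G :: "'x::{real_inner,complete_space} \<times> 'w::real_normed_vector \<Rightarrow> real"
  assumes contG: "continuous_on UNIV G"
    and grad: "\<And>x w y. ((\<lambda>t. (G (x + t *\<^sub>R y, w) - G (x, w)) / t)
                         \<longlongrightarrow> inner (gradG x w) y) (at 0)"
    and c: "c > 0" and L: "L > 0"
    and H1: "\<And>x w. G (x, w) = 1 \<Longrightarrow> norm (gradG x w) \<ge> c"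
    and H4: "\<And>x w w'. \<bar>G (x, w) - G (x, w')\<bar> \<le> L * norm (w - w')"
    and Gy: "G (y, a) = 1"
  shows "\<exists>v. norm (v - y) \<le> 4 * L * norm (a - b) / c \<and> G (v, b) \<ge> 1"
proof (cases "a = b")
  case True
  then show ?thesis using Gy by (intro exI[of _ y]) simp
next
  case False
  define \<delta> where "\<delta> = norm (a - b)"
  have \<delta>: "\<delta> > 0" using False by (simp add: \<delta>_def)
  define wt where "wt \<theta> = b + \<theta> *\<^sub>R (a - b)" for \<theta> :: real
  define F where "F p = G (fst p, wt (snd p))" for p :: "'x \<times> real"
  have Fcont: "continuous_on UNIV F"
    unfolding F_def wt_def by (rule continuous_on_compose2[OF contG]) (auto intro!: continuous_intros)
  have Flip: "F (u, \<theta>') \<ge> F (u, \<theta>) - L * \<delta> * \<bar>\<theta> - \<theta>'\<bar>" for u \<theta> \<theta>'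
  proof -
    have "\<bar>G (u, wt \<theta>) - G (u, wt \<theta>')\<bar> \<le> L * norm (wt \<theta> - wt \<theta>')" by (rule H4)
    also have "wt \<theta> - wt \<theta>' = (\<theta> - \<theta>') *\<^sub>R (a - b)" by (simp add: wt_def algebra_simps)
    also have "L * norm ((\<theta> - \<theta>') *\<^sub>R (a - b)) = L * \<delta> * \<bar>\<theta> - \<theta>'\<bar>" by (simp add: \<delta>_def)
    finally show ?thesis by (simp add: F_def)
  qed
  define A where "A = {p. 0 \<le> snd p \<and> snd p \<le> 1 \<and> 1 \<le> F p}"
  have Acl: "closed A" unfolding A_def
    by (intro closed_Collect_conj closed_Collect_le Fcont continuous_intros)
  have yA: "(y, 1) \<in> A" using Gy by (simp add: A_def F_def wt_def)
  define M where "M = 4 * L * \<delta> / c"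
  have M: "M > 0" using L \<delta> c by (simp add: M_def)
  define f where "f p = M * snd p + norm (fst p - y)" for p :: "'x \<times> real"
  have fcont: "continuous_on A f" unfolding f_def by (intro continuous_intros)
  have flb: "f p \<ge> 0" if "p \<in> A" for p using that M by (simp add: f_def A_def)
  define e where "e = min M (1 / (1 + c / (2 * L * \<delta>)))"
  have cpos: "c / (2 * L * \<delta>) > 0" using c L \<delta> by simp
  hence "1 / (1 + c / (2 * L * \<delta>)) > 0" by simp
  hence e: "e > 0" using M by (simp add: e_def)
  have e1: "e * (1 + c / (2 * L * \<delta>)) \<le> 1"
  proof -
    have "1 + c / (2 * L * \<delta>) > 0" using cpos by simp
    moreover have "e \<le> 1 / (1 + c / (2 * L * \<delta>))" by (simp add: e_def)
    ultimately show ?thesis by (simp add: field_simps)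
  qed
  obtain p where pA: "p \<in> A" and fp: "f p \<le> f (y, 1)"
    and ek: "\<forall>q\<in>A. q \<noteq> p \<longrightarrow> f p - e * dist p q < f q"
    using ekeland[OF Acl yA fcont flb e] by blast
  obtain v \<tau> where p: "p = (v, \<tau>)" by fastforce
  have \<tau>: "0 \<le> \<tau>" "\<tau> \<le> 1" "1 \<le> F (v, \<tau>)" using pA by (auto simp: A_def p)
  have fp': "M * \<tau> + norm (v - y) \<le> M" using fp by (simp add: f_def p)
  hence vy: "norm (v - y) \<le> M" using M \<tau> by (smt (verit) mult_nonneg_nonneg)
  show ?thesis
  proof (cases "\<tau> = 0")
    case True
    hence "G (v, b) \<ge> 1" using \<tau> by (simp add: F_def wt_def)
    thus ?thesis using vy by (auto simp: M_def \<delta>_def)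
  next
    case False
    hence \<tau>pos: "\<tau> > 0" using \<tau> by simp
    have False
    proof (cases "F (v, \<tau>) > 1")
      case True
      define h where "h = min \<tau> ((F (v, \<tau>) - 1) / (L * \<delta>))"
      have h: "h > 0" "h \<le> \<tau>" "h \<le> (F (v, \<tau>) - 1) / (L * \<delta>)"
        using \<tau>pos True L \<delta> by (auto simp: h_def)
      have "L * \<delta> * h \<le> F (v, \<tau>) - 1" using h(3) L \<delta> by (simp add: field_simps)
      moreover have "F (v, \<tau> - h) \<ge> F (v, \<tau>) - L * \<delta> * \<bar>\<tau> - (\<tau> - h)\<bar>" by (rule Flip)
      ultimately have "F (v, \<tau> - h) \<ge> 1" using h by simp
      hence qA: "(v, \<tau> - h) \<in> A" using h \<tau> by (simp add: A_def)
      have "(v, \<tau> - h) \<noteq> p" using h by (simp add: p)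
      hence "f p - e * dist p (v, \<tau> - h) < f (v, \<tau> - h)" using ek qA by blast
      moreover have "dist p (v, \<tau> - h) = h" using h by (simp add: p dist_Pair_Pair dist_real_def)
      moreover have "f (v, \<tau> - h) = f p - M * h" by (simp add: f_def p algebra_simps)
      ultimately have "M * h < e * h" by simp
      hence "M < e" using h by simp
      thus False by (simp add: e_def)
    next
      case False
      hence Fv1: "F (v, \<tau>) = 1" using \<tau> by simp
      define g where "g = gradG v (wt \<tau>)"
      have Gv: "G (v, wt \<tau>) = 1" using Fv1 by (simp add: F_def)
      have ng: "norm g \<ge> c" using H1[OF Gv] by (simp add: g_def)
      hence ngpos: "norm g > 0" using c by linarith
      define n where "n = (1 / norm g) *\<^sub>R g"
      have nn: "norm n = 1" using ngpos by (simp add: n_def)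
      have gn: "inner g n = norm g" using ngpos by (simp add: n_def power2_norm_eq_inner[symmetric] power2_eq_square)
      have "c / 2 < inner (gradG v (wt \<tau>)) n" using gn ng c by (simp add: g_def)
      from order_tendstoD(1)[OF grad[of v n "wt \<tau>"] this]
      have "eventually (\<lambda>t. (G (v + t *\<^sub>R n, wt \<tau>) - G (v, wt \<tau>)) / t > c / 2) (at 0)" .
      then obtain d where d: "d > 0" "\<And>t. t \<noteq> 0 \<Longrightarrow> dist t 0 < d \<Longrightarrow> (G (v + t *\<^sub>R n, wt \<tau>) - G (v, wt \<tau>)) / t > c / 2"
        unfolding eventually_at by auto
      define t where "t = min (d / 2) (2 * L * \<delta> * \<tau> / c)"
      have t: "t > 0" "t < d" "t \<le> 2 * L * \<delta> * \<tau> / c" using d \<tau>pos L \<delta> c by (auto simp: t_def)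
      define h where "h = c * t / (2 * L * \<delta>)"
      have h: "h > 0" "h \<le> \<tau>" using t c L \<delta> by (auto simp: h_def field_simps)
      have "(G (v + t *\<^sub>R n, wt \<tau>) - G (v, wt \<tau>)) / t > c / 2" using d t by simp
      hence G1: "G (v + t *\<^sub>R n, wt \<tau>) - 1 > c / 2 * t" using t Gv by (simp add: field_simps)
      have "F (v + t *\<^sub>R n, \<tau> - h) \<ge> F (v + t *\<^sub>R n, \<tau>) - L * \<delta> * \<bar>\<tau> - (\<tau> - h)\<bar>" by (rule Flip)
      moreover have "L * \<delta> * \<bar>\<tau> - (\<tau> - h)\<bar> = c / 2 * t" using h L \<delta> by (simp add: h_def field_simps)
      ultimately have "F (v + t *\<^sub>R n, \<tau> - h) \<ge> 1" using G1 by (simp add: F_def)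
      hence qA: "(v + t *\<^sub>R n, \<tau> - h) \<in> A" using h \<tau> by (simp add: A_def)
      have "(v + t *\<^sub>R n, \<tau> - h) \<noteq> p" using h by (simp add: p)
      hence ekq: "f p - e * dist p (v + t *\<^sub>R n, \<tau> - h) < f (v + t *\<^sub>R n, \<tau> - h)" using ek qA by blast
      have "dist p (v + t *\<^sub>R n, \<tau> - h) = sqrt (t\<^sup>2 + h\<^sup>2)"
      proof -
        have "dist v (v + t *\<^sub>R n) = t" using t nn by (simp add: dist_norm)
        moreover have "dist \<tau> (\<tau> - h) = h" using h by (simp add: dist_real_def)
        ultimately show ?thesis by (simp only: p dist_Pair_Pair)
      qed
      also have "\<dots> \<le> t + h" using sqrt_sum_squares_le_sum_abs[of t h] t h by simp
      finally have dq: "dist p (v + t *\<^sub>R n, \<tau> - h) \<le> t + h" .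
      have "norm (v + t *\<^sub>R n - y) \<le> norm (v - y) + t"
        using norm_triangle_ineq[of "v - y" "t *\<^sub>R n"] t nn by (simp add: algebra_simps)
      hence "f (v + t *\<^sub>R n, \<tau> - h) \<le> f p - M * h + t" by (simp add: f_def p algebra_simps)
      moreover have "M * h = 2 * t" using c L \<delta> by (simp add: M_def h_def field_simps)
      ultimately have "f (v + t *\<^sub>R n, \<tau> - h) \<le> f p - t" by simp
      hence "t < e * dist p (v + t *\<^sub>R n, \<tau> - h)" using ekq by simp
      also have "\<dots> \<le> e * (t + h)" using dq e by (simp add: mult_left_mono)
      also have "e * (t + h) = t * (e * (1 + c / (2 * L * \<delta>)))" using L \<delta> by (simp add: h_def field_simps)
      also have "\<dots> \<le> t * 1" using e1 t by (intro mult_left_mono) auto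
      finally show False by simp
    qed
    thus ?thesis ..
  qed
qed




lemma infdist_lessE:
  assumes "A \<noteq> {}" "infdist x A < d"
  obtains a where "a \<in> A" "dist x a < d"
  using assms unfolding infdist_notempty[OF assms(1)]
  by (metis bdd_below_image_dist cINF_less_iff)

lemma one_dir:
  fixes G :: "'x::{real_inner,complete_space} \<times> 'w::real_normed_vector \<Rightarrow> real"
  assumes contG: "continuous_on UNIV G"
    and grad: "\<And>x w y. ((\<lambda>t. (G (x + t *\<^sub>R y, w) - G (x, w)) / t)
                         \<longlongrightarrow> inner (gradG x w) y) (at 0)"
    and c: "c > 0" and L: "L > 0" and lam: "lam > 0"
    and H1: "\<And>x w. G (x, w) = 1 \<Longrightarrow> norm (gradG x w) \<ge> c"
    and H3: "\<And>x z w. x \<in> frontier (Zset G w) \<Longrightarrow> z \<in> Zset G w \<Longrightarrow>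
               inner (gradG x w - gradG z w) (x - z) \<ge> - lam * (norm (x - z))\<^sup>2"
    and H4: "\<And>x w w'. \<bar>G (x, w) - G (x, w')\<bar> \<le> L * norm (w - w')"
    and small: "4 * L * norm (w - w') / c < c / (2 * lam)"
    and x: "x \<in> Zset G w" and x': "x' \<in> Zset G w'"
    and hb: "\<And>z. z \<in> Zset G w \<Longrightarrow> infdist z (Zset G w') \<le> h"
  shows "infdist x (frontier (Zset G w)) \<le> norm (x - x') + infdist x' (frontier (Zset G w')) + h"
proof -
  have h0: "h \<ge> 0" using hb[OF x] infdist_nonneg[of x "Zset G w'"] by linarith
  have fr: "y \<in> frontier (Zset G u)" if "G (y, u) = 1" for y u
  proof -
    have "gradG y u \<noteq> 0" using H1[OF that] c by auto
    thus ?thesis using G1_frontier[of G y gradG u, OF grad[of y "gradG y u" u] _ that] by simp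
  qed
  show ?thesis
  proof (cases "frontier (Zset G w) = {}")
    case True
    then show ?thesis using h0 infdist_nonneg[of x' "frontier (Zset G w')"]
      by (simp add: infdist_def)
  next
    case False
    then obtain y0 where y0: "y0 \<in> frontier (Zset G w)" by blast
    have "G (y0, w) = 1" by (rule frontier_G1[OF contG y0])
    from speed[OF contG grad c L H1 H4 this, of w']
    obtain v0 where "G (v0, w') \<ge> 1" by blast
    have F'ne: "frontier (Zset G w') \<noteq> {}"
    proof (cases "G (v0, w') = 1")
      case True thus ?thesis using fr by blast
    next
      case False
      hence "v0 \<notin> Zset G w'" using \<open>G (v0, w') \<ge> 1\<close> by (simp add: Zset_def)
      moreover have "Zset G w' \<noteq> {}" using x' by blast
      ultimately show ?thesis using frontier_eq_empty by blast
    qed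
    define r where "r = infdist x (frontier (Zset G w))"
    define r' where "r' = infdist x' (frontier (Zset G w'))"
    show ?thesis
    proof (rule ccontr)
      assume "\<not> ?thesis"
      hence gt: "r > norm (x - x') + r' + h" by (simp add: r_def r'_def)
      define gap where "gap = r - norm (x - x') - r' - h"
      have gap: "gap > 0" using gt by (simp add: gap_def)
      have "infdist x' (frontier (Zset G w')) < r' + gap / 2" using gap by (simp add: r'_def)
      then obtain y' where y': "y' \<in> frontier (Zset G w')" "dist x' y' < r' + gap / 2"
        using infdist_lessE[OF F'ne] by blast
      define s where "s = r - norm (x - x') - dist x' y'"
      have s: "s > h + gap / 2" using y'(2) unfolding s_def gap_def by argo
      have rpos: "r > 0" using gt h0 infdist_nonneg[of x' "frontier (Zset G w')"] r'_def
        by (smt (verit) norm_ge_zero)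
      have notfr: "u \<notin> frontier (Zset G w)" if "dist x u < r" for u
        using infdist_le[of u "frontier (Zset G w)" x] that by (auto simp: r_def)
      have ballZ: "ball x r \<subseteq> Zset G w"
      proof (rule ccontr)
        assume "\<not> ball x r \<subseteq> Zset G w"
        hence "ball x r - Zset G w \<noteq> {}" by blast
        moreover have "ball x r \<inter> Zset G w \<noteq> {}" using x rpos centre_in_ball by blast
        ultimately have "ball x r \<inter> frontier (Zset G w) \<noteq> {}"
          using connected_Int_frontier[OF connected_ball] by blast
        thus False using notfr by auto
      qed
      have ballsub: "ball y' s \<subseteq> ball x r"
      proof
        fix u assume "u \<in> ball y' s"
        hence "dist y' u < s" by simp
        moreover have "dist x u \<le> dist x x' + dist x' y' + dist y' u"
          by (metis dist_triangle add_mono order_trans order_refl)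
        ultimately show "u \<in> ball x r" by (simp add: s_def dist_norm)
      qed
      have Gy': "G (y', w') = 1" by (rule frontier_G1[OF contG y'(1)])
      from speed[OF contG grad c L H1 H4 Gy', of w]
      obtain v where v: "norm (v - y') \<le> 4 * L * norm (w' - w) / c" "G (v, w) \<ge> 1" by blast
      have "v \<notin> ball x r"
      proof
        assume vb: "v \<in> ball x r"
        hence "G (v, w) = 1" using ballZ v(2) by (auto simp: Zset_def)
        hence "v \<in> frontier (Zset G w)" by (rule fr)
        thus False using notfr vb by simp
      qed
      hence "v \<notin> ball y' s" using ballsub by blast
      hence "s \<le> norm (v - y')" by (simp add: dist_norm norm_minus_commute)
      also have "\<dots> < c / (2 * lam)" using v(1) small by (simp add: norm_minus_commute)
      finally have sc: "s < c / (2 * lam)" .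
      define t where "t = h + gap / 4"
      have t: "0 \<le> t" "t \<le> c / (2 * lam)" "h < t" "t < s" using h0 gap s sc by (auto simp: t_def)
      define q where "q = y' + (t / norm (gradG y' w')) *\<^sub>R gradG y' w'"
      have tq: "t \<le> infdist q (Zset G w')"
        unfolding q_def by (rule ext_dist[OF contG grad c lam H1 H3 y'(1) t(1) t(2)])
      have ng: "norm (gradG y' w') > 0" using H1[OF Gy'] c by linarith
      have "dist y' q = t" using ng t by (simp add: q_def dist_norm)
      hence "q \<in> ball y' s" using t by simp
      hence "q \<in> Zset G w" using ballsub ballZ by blast
      hence "infdist q (Zset G w') \<le> h" by (rule hb)
      thus False using tq t by simp
    qed
  qed
qed




theorem lemma2p5:
  fixes G :: "'x::{real_inner,complete_space} \<times> 'w::banach \<Rightarrow> real"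
    and gradG :: "'x \<Rightarrow> 'w \<Rightarrow> 'x"
    and lam c L :: real
    and \<mu>1 :: "'w \<Rightarrow> real \<Rightarrow> real"
    and \<mu>2 :: "real \<Rightarrow> real"
    and K :: real
  assumes G_nonneg: "\<And>p. G p \<ge> 0"
    and G_loclip: "locally_lipschitz G"
    and grad: "\<And>x w y. ((\<lambda>t. (G (x + t *\<^sub>R y, w) - G (x, w)) / t)
                         \<longlongrightarrow> inner (gradG x w) y) (at 0)"
    and consts_pos: "lam > 0" "c > 0" "L > 0"
    and \<mu>1_nonneg: "\<And>w s. s \<ge> 0 \<Longrightarrow> \<mu>1 w s \<ge> 0"
    and \<mu>2_nonneg: "\<And>s. s \<ge> 0 \<Longrightarrow> \<mu>2 s \<ge> 0"
    and \<mu>1_0: "\<And>w. \<mu>1 w 0 = 0"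
    and \<mu>2_0: "\<mu>2 0 = 0"
    and \<mu>1_lim: "\<And>w. filterlim (\<mu>1 w) at_top at_top"
    and \<mu>2_lim: "filterlim \<mu>2 at_top at_top"
    and H1: "\<And>x w. G (x, w) = 1 \<Longrightarrow> norm (gradG x w) \<ge> c"
    and H2: "\<And>x y w. x \<in> Zset G w \<Longrightarrow> y \<in> Zset G w \<Longrightarrow>
               norm (gradG x w - gradG y w) \<le> \<mu>1 w (norm (x - y))"
    and H3: "\<And>x z w. x \<in> frontier (Zset G w) \<Longrightarrow> z \<in> Zset G w \<Longrightarrow>
               inner (gradG x w - gradG z w) (x - z) \<ge> - lam * (norm (x - z))\<^sup>2"
    and H4: "\<And>x w w'. \<bar>G (x, w) - G (x, w')\<bar> \<le> L * norm (w - w')"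
    and H5: "\<And>x w \<rho>. \<rho> > 0 \<Longrightarrow> infdist x (Zset G w) \<ge> \<rho> \<Longrightarrow> G (x, w) - 1 \<ge> \<mu>2 \<rho>"
    and K_pos: "K > 0"
  shows "\<exists>mK>0. \<forall>w w' x x'. max (norm w) (norm w') \<le> K \<longrightarrow> norm (w - w') < mK \<longrightarrow>
           x \<in> Zset G w \<longrightarrow> x' \<in> Zset G w' \<longrightarrow>
           ereal \<bar>infdist x (frontier (Zset G w)) - infdist x' (frontier (Zset G w'))\<bar>
             \<le> ereal (norm (x - x')) + hausdorff_dist (Zset G w) (Zset G w')"
proof -
  have contG: "continuous_on UNIV G" using cont_G[OF G_loclip] .
  have lam: "lam > 0" and c: "c > 0" and L: "L > 0" using consts_pos by auto
  define mK where "mK = c^2 / (8 * lam * L)"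
  have mK: "mK > 0" using consts_pos by (simp add: mK_def)
  show ?thesis
  proof (intro exI[of _ mK] conjI mK allI impI)
    fix w w' :: 'w and x x' :: 'x
    assume dw: "norm (w - w') < mK" and x: "x \<in> Zset G w" and x': "x' \<in> Zset G w'"
    have "4 * L * norm (w - w') / c < 4 * L * mK / c"
      using dw c L by (simp add: divide_strict_right_mono)
    also have "4 * L * mK / c = c / (2 * lam)" using c L lam
      by (simp add: mK_def field_simps power2_eq_square)
    finally have small: "4 * L * norm (w - w') / c < c / (2 * lam)" .
    hence small': "4 * L * norm (w' - w) / c < c / (2 * lam)" by (simp add: norm_minus_commute)
    define H where "H = hausdorff_dist (Zset G w) (Zset G w')"
    show "ereal \<bar>infdist x (frontier (Zset G w)) - infdist x' (frontier (Zset G w'))\<bar>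
             \<le> ereal (norm (x - x')) + hausdorff_dist (Zset G w) (Zset G w')"
    proof (cases "H = \<infinity>")
      case True then show ?thesis by (simp add: H_def)
    next
      case False
      have le1: "ereal (infdist z (Zset G w')) \<le> H" if "z \<in> Zset G w" for z
        unfolding H_def hausdorff_dist_def by (rule max.coboundedI1, rule SUP_upper[OF that])
      have le2: "ereal (infdist z (Zset G w)) \<le> H" if "z \<in> Zset G w'" for z
        unfolding H_def hausdorff_dist_def by (rule max.coboundedI2, rule SUP_upper[OF that])
      have "ereal 0 \<le> H" using le1[OF x] infdist_nonneg[of x "Zset G w'"]
        by (meson ereal_less_eq(3) order_trans)
      then obtain h where Hh: "H = ereal h" using False by (cases H) auto
      have hb1: "infdist z (Zset G w') \<le> h" if "z \<in> Zset G w" for z using le1[OF that] Hh by simp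
      have hb2: "infdist z (Zset G w) \<le> h" if "z \<in> Zset G w'" for z using le2[OF that] Hh by simp
      have d1: "infdist x (frontier (Zset G w)) \<le> norm (x - x') + infdist x' (frontier (Zset G w')) + h"
        by (rule one_dir[OF contG grad c L lam H1 H3 H4 small x x' hb1])
      have d2: "infdist x' (frontier (Zset G w')) \<le> norm (x' - x) + infdist x (frontier (Zset G w)) + h"
        by (rule one_dir[OF contG grad c L lam H1 H3 H4 small' x' x hb2])
      have "\<bar>infdist x (frontier (Zset G w)) - infdist x' (frontier (Zset G w'))\<bar> \<le> norm (x - x') + h"
        using d1 d2 by (simp add: norm_minus_commute abs_le_iff)
      thus ?thesis using Hh by (simp add: H_def)
    qed
  qed
qed


end
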